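(* Let $D$ be a connected link diagram with at least one crossing. There are precisely two sign assignments $s_1$ and $s_2$ for $D$, and $s_1=-s_2$.
   Context: Let $D$ be an oriented link diagram in $S^2$. Its shadow gives a CW decomposition $X$ of $S^2$: $0$-cells are the crossings, $1$-cells are the arcs of $D$ between consecutive crossings (oriented by the link orientation, so each $1$-cell $e$ runs from $e(0)$ to $e(1)$), $2$-cells are the complementary regions. For $i\in\{0,1\}$ let $h(e,i)=1$ if $e$ is the upper strand at the crossing $e(i)$ and $h(e,i)=-1$ if it is the lower strand. Define $\beta(e)=-1$ if $h(e,0)=h(e,1)$ and $\beta(e)=1$ otherwise. A sign assignment is a function $s:X^0\to\{\pm1\}$ (from crossings to $\{\pm 1\}$) such that $s(e(0))s(e(1))=\beta(e)$ for every $1$-cell $e$. *)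

theory Defs
  imports Main
begin

text \<open>
  Combinatorial model of a connected oriented link diagram in the 2-sphere.
  Crossings (0-cells) form the finite set V, arcs (1-cells) the finite set E.
  Each arc e runs from endpt e 0 = e(0) to endpt e 1 = e(1).  A dart (half-edge)
  is a pair (e,i) with e in E and i in {0,1}: the end of e at the crossing e(i).
  rot is the rotation system: it cyclically permutes (counterclockwise) the four
  darts at each crossing.  Opposite darts (d and rot (rot d)) form one strand
  through the crossing, which is either the upper strand (h = 1) or the lower
  strand (h = -1); the two strands differ, and by the orientation each strand
  enters the crossing once and leaves it once.  The embedding in S^2 is
  encoded by the rotation system together with the Euler characteristic
  condition V - E + F = 2, the faces (complementary regions) being the orbits
  of the face permutation rot o flip.
\<close>

definition darts :: "'e set \<Rightarrow> ('e \<times> nat) set" where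
  "darts E = E \<times> {0, 1}"

definition dart_vertex :: "('e \<Rightarrow> nat \<Rightarrow> 'v) \<Rightarrow> ('e \<times> nat) \<Rightarrow> 'v" where
  "dart_vertex endpt d = endpt (fst d) (snd d)"

definition darts_at :: "'e set \<Rightarrow> ('e \<Rightarrow> nat \<Rightarrow> 'v) \<Rightarrow> 'v \<Rightarrow> ('e \<times> nat) set" where
  "darts_at E endpt v = {d \<in> darts E. dart_vertex endpt d = v}"

definition flip :: "('e \<times> nat) \<Rightarrow> ('e \<times> nat)" where
  "flip d = (fst d, 1 - snd d)"

definition faces :: "'e set \<Rightarrow> (('e \<times> nat) \<Rightarrow> ('e \<times> nat)) \<Rightarrow> ('e \<times> nat) set set" where
  "faces E rot = (\<lambda>d. {((rot \<circ> flip) ^^ k) d | k. True}) ` darts E"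

definition shadow_connected :: "'v set \<Rightarrow> 'e set \<Rightarrow> ('e \<Rightarrow> nat \<Rightarrow> 'v) \<Rightarrow> bool" where
  "shadow_connected V E endpt \<longleftrightarrow>
     (\<forall>u\<in>V. \<forall>w\<in>V. (u, w) \<in> ({(endpt e 0, endpt e 1) | e. e \<in> E}
                                  \<union> {(endpt e 1, endpt e 0) | e. e \<in> E})\<^sup>*)"

definition link_diagram ::
  "'v set \<Rightarrow> 'e set \<Rightarrow> ('e \<Rightarrow> nat \<Rightarrow> 'v) \<Rightarrow> ('e \<Rightarrow> nat \<Rightarrow> int)
     \<Rightarrow> (('e \<times> nat) \<Rightarrow> ('e \<times> nat)) \<Rightarrow> bool" where
  "link_diagram V E endpt h rot \<longleftrightarrow>
     finite V \<and> finite E \<and>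
     (\<forall>e\<in>E. \<forall>i\<in>{0,1}. endpt e i \<in> V \<and> (h e i = 1 \<or> h e i = -1)) \<and>
     bij_betw rot (darts E) (darts E) \<and>
     (\<forall>v\<in>V. card (darts_at E endpt v) = 4 \<and>
        (\<forall>d\<in>darts_at E endpt v. darts_at E endpt v = {(rot ^^ k) d | k. k < 4})) \<and>
     (\<forall>d\<in>darts E. h (fst (rot (rot d))) (snd (rot (rot d))) = h (fst d) (snd d)
                 \<and> h (fst (rot d)) (snd (rot d)) = - h (fst d) (snd d)
                 \<and> snd (rot (rot d)) \<noteq> snd d)"

definition planar_connected_link_diagram ::
  "'v set \<Rightarrow> 'e set \<Rightarrow> ('e \<Rightarrow> nat \<Rightarrow> 'v) \<Rightarrow> ('e \<Rightarrow> nat \<Rightarrow> int)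
     \<Rightarrow> (('e \<times> nat) \<Rightarrow> ('e \<times> nat)) \<Rightarrow> bool" where
  "planar_connected_link_diagram V E endpt h rot \<longleftrightarrow>
     link_diagram V E endpt h rot \<and> shadow_connected V E endpt \<and>
     int (card V) - int (card E) + int (card (faces E rot)) = 2"

definition beta :: "('e \<Rightarrow> nat \<Rightarrow> int) \<Rightarrow> 'e \<Rightarrow> int" where
  "beta h e = (if h e 0 = h e 1 then -1 else 1)"

definition sign_assignment ::
  "'v set \<Rightarrow> 'e set \<Rightarrow> ('e \<Rightarrow> nat \<Rightarrow> 'v) \<Rightarrow> ('e \<Rightarrow> nat \<Rightarrow> int) \<Rightarrow> ('v \<Rightarrow> int) \<Rightarrow> bool" where
  "sign_assignment V E endpt h s \<longleftrightarrow>
     (\<forall>v\<in>V. s v = 1 \<or> s v = -1) \<and>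
     (\<forall>e\<in>E. s (endpt e 0) * s (endpt e 1) = beta h e)"

end

theory Submission
  imports Defs
begin


definition sd :: "'a set \<Rightarrow> 'a set \<Rightarrow> 'a set" where
  "sd A B = (A - B) \<union> (B - A)"

lemma in_sd[simp]: "x \<in> sd A B \<longleftrightarrow> (x \<in> A) \<noteq> (x \<in> B)"
  by (auto simp: sd_def)

lemma card_sd: assumes "finite A" "finite B"
  shows "card (sd A B) + 2 * card (A \<inter> B) = card A + card B"
proof -
  have "sd A B = (A \<union> B) - (A \<inter> B)" by auto
  then have "card (sd A B) = card (A \<union> B - A \<inter> B)" by simp
  also have "\<dots> = card (A \<union> B) - card (A \<inter> B)"
    using assms by (intro card_Diff_subset) auto
  finally have "card (sd A B) = card (A \<union> B) - card (A \<inter> B)" .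
  moreover have "card A + card B = card (A \<union> B) + card (A \<inter> B)"
    using assms card_Un_Int by blast
  moreover have "card (A \<inter> B) \<le> card (A \<union> B)" using assms by (intro card_mono) auto
  ultimately show ?thesis by simp
qed

lemma odd_card_sd: "finite A \<Longrightarrow> finite B \<Longrightarrow> odd (card (sd A B)) \<longleftrightarrow> odd (card A) \<noteq> odd (card B)"
  using card_sd[of A B] by (metis even_add even_mult_iff even_numeral)

lemma hom_card:
  fixes \<phi> :: "'a set \<Rightarrow> 'b set"
  assumes fin: "finite X"
    and hom: "\<And>S T. S \<subseteq> X \<Longrightarrow> T \<subseteq> X \<Longrightarrow> \<phi> (sd S T) = sd (\<phi> S) (\<phi> T)"
  shows "card (Pow X) = card {S\<in>Pow X. \<phi> S = {}} * card (\<phi> ` Pow X)"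
proof -
  let ?K = "{S\<in>Pow X. \<phi> S = {}}"
  have fib: "card {S\<in>Pow X. \<phi> S = b} = card ?K" if "b \<in> \<phi> ` Pow X" for b
  proof -
    from that obtain S0 where S0': "S0 \<in> Pow X" "\<phi> S0 = b" by blast
    then have S0: "S0 \<subseteq> X" "\<phi> S0 = b" by auto
    have "bij_betw (\<lambda>S. sd S S0) ?K {S\<in>Pow X. \<phi> S = b}"
    proof (rule bij_betw_byWitness[where f'="\<lambda>S. sd S S0"])
      show "(\<lambda>S. sd S S0) ` ?K \<subseteq> {S\<in>Pow X. \<phi> S = b}"
      proof
        fix S' assume "S' \<in> (\<lambda>S. sd S S0) ` ?K"
        then obtain S where "S \<in> ?K" "S' = sd S S0" by blast
        then have "S \<subseteq> X" "\<phi> S = {}" "S' = sd S S0" by auto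
        then show "S' \<in> {S\<in>Pow X. \<phi> S = b}" using hom[of S S0] S0 by auto
      qed
      show "(\<lambda>S. sd S S0) ` {S\<in>Pow X. \<phi> S = b} \<subseteq> ?K"
      proof
        fix S' assume "S' \<in> (\<lambda>S. sd S S0) ` {S\<in>Pow X. \<phi> S = b}"
        then obtain S where "S \<in> {S\<in>Pow X. \<phi> S = b}" "S' = sd S S0" by blast
        then have "S \<subseteq> X" "\<phi> S = b" "S' = sd S S0" by auto
        then show "S' \<in> ?K" using hom[of S S0] S0 by auto
      qed
    qed auto
    then show ?thesis by (simp add: bij_betw_same_card)
  qed
  have "Pow X = (\<Union>b\<in>\<phi> ` Pow X. {S\<in>Pow X. \<phi> S = b})" by auto
  then have "card (Pow X) = (\<Sum>b\<in>\<phi> ` Pow X. card {S\<in>Pow X. \<phi> S = b})"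
    using fin by (subst card_UN_disjoint[symmetric]) auto
  also have "\<dots> = (\<Sum>b\<in>\<phi> ` Pow X. card ?K)" using fib by (rule sum.cong[OF refl])
  finally show ?thesis by simp
qed



locale diag =
  fixes V :: "'v set" and E :: "'e set" and endpt :: "'e \<Rightarrow> nat \<Rightarrow> 'v"
    and h :: "'e \<Rightarrow> nat \<Rightarrow> int" and rot :: "('e \<times> nat) \<Rightarrow> ('e \<times> nat)"
  assumes pcl: "planar_connected_link_diagram V E endpt h rot"
    and Vne: "V \<noteq> {}"
begin

abbreviation "D \<equiv> darts E"
definition phi :: "'e \<times> nat \<Rightarrow> 'e \<times> nat" where "phi d = rot (flip d)"
lemma phi_comp: "rot \<circ> flip = phi" by (rule ext) (simp add: phi_def)
abbreviation "vert \<equiv> dart_vertex endpt"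
abbreviation "orb d \<equiv> {(phi ^^ k) d | k. True}"
abbreviation "F \<equiv> faces E rot"
abbreviation "R \<equiv> {(endpt e 0, endpt e 1) | e. e \<in> E} \<union> {(endpt e 1, endpt e 0) | e. e \<in> E}"

lemma LD: "link_diagram V E endpt h rot" using pcl unfolding planar_connected_link_diagram_def by blast
lemma finV: "finite V" using LD unfolding link_diagram_def by blast
lemma finE: "finite E" using LD unfolding link_diagram_def by blast
lemma endpt_in: "e \<in> E \<Longrightarrow> i \<in> {0,1} \<Longrightarrow> endpt e i \<in> V"
  using LD unfolding link_diagram_def by blast
lemma hval: "e \<in> E \<Longrightarrow> i \<in> {0,1} \<Longrightarrow> h e i = 1 \<or> h e i = -1"
  using LD unfolding link_diagram_def by blast
lemma rot_bij: "bij_betw rot D D" using LD unfolding link_diagram_def by blast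
lemma at4: "v \<in> V \<Longrightarrow> card (darts_at E endpt v) = 4"
  using LD unfolding link_diagram_def by blast
lemma atrot: "v \<in> V \<Longrightarrow> d \<in> darts_at E endpt v \<Longrightarrow> darts_at E endpt v = {(rot ^^ k) d | k. k < 4}"
  using LD unfolding link_diagram_def by blast
lemma hrot: "d \<in> D \<Longrightarrow> h (fst (rot d)) (snd (rot d)) = - h (fst d) (snd d)"
  using LD unfolding link_diagram_def by blast
lemma conn: "shadow_connected V E endpt"
  using pcl unfolding planar_connected_link_diagram_def by blast
lemma euler: "int (card V) - int (card E) + int (card F) = 2"
  using pcl unfolding planar_connected_link_diagram_def by blast

lemma D_iff: "d \<in> D \<longleftrightarrow> fst d \<in> E \<and> snd d \<in> {0,1}"
  unfolding darts_def by (cases d) auto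
lemma finD: "finite D" unfolding darts_def using finE by simp

lemma flip_D: "d \<in> D \<Longrightarrow> flip d \<in> D" unfolding D_iff flip_def by auto
lemma flip_flip: "d \<in> D \<Longrightarrow> flip (flip d) = d" unfolding D_iff flip_def by (cases d) auto
lemma fst_flip[simp]: "fst (flip d) = fst d" unfolding flip_def by simp
lemma snd_flip[simp]: "snd (flip d) = 1 - snd d" unfolding flip_def by simp

lemma rot_D: "d \<in> D \<Longrightarrow> rot d \<in> D" using rot_bij bij_betwE by blast
lemma rot_inj: "inj_on rot D" using rot_bij bij_betw_def by blast
lemma vert_D: "d \<in> D \<Longrightarrow> vert d \<in> V"
  unfolding dart_vertex_def D_iff using endpt_in by blast
lemma vert_rot: assumes "d \<in> D" shows "vert (rot d) = vert d"
proof -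
  let ?v = "vert d"
  have v: "?v \<in> V" using vert_D assms .
  have "d \<in> darts_at E endpt ?v" unfolding darts_at_def using assms by simp
  then have "darts_at E endpt ?v = {(rot ^^ k) d | k. k < 4}" using atrot v by blast
  moreover have "rot d \<in> {(rot ^^ k) d | k. k < 4}"
    by (rule CollectI, rule exI[where x=1]) simp
  ultimately show ?thesis unfolding darts_at_def by auto
qed

lemma phi_D: "d \<in> D \<Longrightarrow> phi d \<in> D" using rot_D flip_D by (simp add: phi_def)
lemma phi_inj: "inj_on phi D"
proof (rule inj_onI)
  fix x y assume "x \<in> D" "y \<in> D" "phi x = phi y"
  then have "flip x = flip y" using rot_inj flip_D unfolding inj_on_def phi_def by auto
  then show "x = y" using flip_flip \<open>x \<in> D\<close> \<open>y \<in> D\<close> by metis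
qed
lemma vert_phi: "d \<in> D \<Longrightarrow> vert (phi d) = vert (flip d)"
  using vert_rot flip_D by (simp add: phi_def)

lemma fs: "(phi ^^ Suc k) d = phi ((phi ^^ k) d)"
  by (subst funpow.simps(2)) (rule comp_apply)
lemma fadd: "(phi ^^ (m + n)) d = (phi ^^ m) ((phi ^^ n) d)"
  by (subst funpow_add) (rule comp_apply)

lemma funpow_D: "d \<in> D \<Longrightarrow> (phi ^^ k) d \<in> D"
proof (induction k)
  case 0 then show ?case by simp
next
  case (Suc k) then show ?case using phi_D[of "(phi ^^ k) d"] by (simp only: fs)
qed
lemma funpow_inj: "inj_on (phi ^^ k) D"
proof (induction k)
  case 0 then show ?case by simp
next
  case (Suc k)
  show ?case
  proof (rule inj_onI)
    fix x y assume xy: "x \<in> D" "y \<in> D" "(phi ^^ Suc k) x = (phi ^^ Suc k) y"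
    then have "phi ((phi ^^ k) x) = phi ((phi ^^ k) y)" by (simp only: fs)
    then have "(phi ^^ k) x = (phi ^^ k) y" using phi_inj funpow_D xy unfolding inj_on_def by blast
    then show "x = y" using Suc xy unfolding inj_on_def by blast
  qed
qed

lemma period: assumes d: "d \<in> D" shows "\<exists>p>0. (phi ^^ p) d = d"
proof -
  have "\<not> inj_on (\<lambda>k. (phi ^^ k) d) UNIV"
  proof
    assume inj: "inj_on (\<lambda>k. (phi ^^ k) d) UNIV"
    have "(\<lambda>k. (phi ^^ k) d) ` UNIV \<subseteq> D" using funpow_D[OF d] by blast
    then have "finite ((\<lambda>k. (phi ^^ k) d) ` UNIV)" using finite_subset finD by blast
    then have "finite (UNIV::nat set)" using finite_imageD inj by blast
    then show False by simp
  qed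
  then obtain i j where ij: "i \<noteq> j" "(phi ^^ i) d = (phi ^^ j) d" unfolding inj_on_def by auto
  obtain a b where ab: "a < b" "(phi ^^ a) d = (phi ^^ b) d"
    using ij by (metis linorder_neqE_nat)
  have "(phi ^^ a) ((phi ^^ (b - a)) d) = (phi ^^ b) d"
    using ab by (metis funpow_add comp_apply le_add_diff_inverse less_imp_le)
  then have "(phi ^^ a) ((phi ^^ (b - a)) d) = (phi ^^ a) d" using ab by simp
  then have "(phi ^^ (b - a)) d = d" using funpow_inj funpow_D d unfolding inj_on_def by blast
  then show ?thesis using ab by (intro exI[where x="b - a"]) simp
qed

lemma period_mult: "(phi ^^ p) d = d \<Longrightarrow> (phi ^^ (p * n)) d = d"
proof (induction n)
  case 0 then show ?case by simp
next
  case (Suc n)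
  have "(phi ^^ (p * Suc n)) d = (phi ^^ p) ((phi ^^ (p * n)) d)"
    using fadd[of p "p * n" d] by simp
  then show ?case using Suc by simp
qed

lemma orb_sub: "d \<in> D \<Longrightarrow> orb d \<subseteq> D" using funpow_D by blast
lemma orb_self: "d \<in> orb d" by (rule CollectI, rule exI[where x=0]) simp

lemma orb_eq: assumes d: "d \<in> D" and x: "x \<in> orb d" shows "orb x = orb d"
proof -
  obtain m where m: "x = (phi ^^ m) d" using x by blast
  obtain p where p: "p > 0" "(phi ^^ p) d = d" using period d by blast
  have pm: "(phi ^^ (p * m)) d = d" using period_mult p by blast
  have mle: "m \<le> p * m" using p by simp
  show ?thesis
  proof
    show "orb x \<subseteq> orb d"
    proof
      fix y assume "y \<in> orb x"
      then obtain k where "y = (phi ^^ k) x" by blast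
      then have "y = (phi ^^ (k + m)) d" using m fadd by metis
      then show "y \<in> orb d" by blast
    qed
    show "orb d \<subseteq> orb x"
    proof
      fix y assume "y \<in> orb d"
      then obtain k where k: "y = (phi ^^ k) d" by blast
      have "(phi ^^ (k + p * m - m)) x = (phi ^^ (k + p * m - m + m)) d"
        using m fadd by metis
      also have "k + p * m - m + m = k + p * m" using mle by linarith
      also have "(phi ^^ (k + p * m)) d = (phi ^^ k) d" using pm fadd by metis
      finally have e: "(phi ^^ (k + p * m - m)) x = (phi ^^ k) d" .
      show "y \<in> orb x" unfolding k
        by (rule CollectI, rule exI[where x="k + p * m - m"]) (simp only: e[symmetric] simp_thms)
    qed
  qed
qed

lemma F_iff: "f \<in> F \<longleftrightarrow> (\<exists>x\<in>D. f = orb x)" unfolding faces_def phi_comp by auto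
lemma F_sub: "f \<in> F \<Longrightarrow> f \<subseteq> D" by (metis F_iff orb_sub)
lemma F_fin: "f \<in> F \<Longrightarrow> finite f" using F_sub finD finite_subset by blast
lemma finF: "finite F" unfolding faces_def using finD by simp

lemma phi_orb: "x \<in> orb d \<Longrightarrow> phi x \<in> orb d"
proof -
  assume "x \<in> orb d"
  then obtain k where "x = (phi ^^ k) d" by blast
  then have "phi x = (phi ^^ Suc k) d" by (simp only: fs)
  then show ?thesis by blast
qed

lemma phi_face: assumes f: "f \<in> F" shows "phi ` f = f"
proof -
  have sub: "phi ` f \<subseteq> f" using f phi_orb unfolding F_iff by blast
  have "card (phi ` f) = card f"
    using card_image inj_on_subset[OF phi_inj F_sub[OF f]] by blast
  then show ?thesis using card_subset_eq[OF F_fin[OF f] sub] by blast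
qed

lemma card_shift: fixes P :: "'e \<times> nat \<Rightarrow> bool" assumes f: "f \<in> F" shows "card {x\<in>f. P (phi x)} = card {x\<in>f. P x}"
proof -
  let ?A = "{x\<in>f. P (phi x)}"
  have pf: "phi ` f = f" using phi_face[OF f] .
  have "phi ` ?A = {x\<in>f. P x}"
  proof
    show "phi ` ?A \<subseteq> {x\<in>f. P x}"
    proof
      fix y assume "y \<in> phi ` ?A"
      then obtain x where x: "x \<in> f" "P (phi x)" "y = phi x" by blast
      have "phi x \<in> phi ` f" using x(1) by (rule imageI)
      then have "phi x \<in> f" unfolding pf .
      then show "y \<in> {x\<in>f. P x}" using x(2,3) by blast
    qed
    show "{x\<in>f. P x} \<subseteq> phi ` ?A"
    proof
      fix y assume y: "y \<in> {x\<in>f. P x}"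
      then have "y \<in> phi ` f" unfolding pf by blast
      then obtain x where "x \<in> f" "y = phi x" by blast
      then show "y \<in> phi ` ?A" using y by blast
    qed
  qed
  moreover have "?A \<subseteq> D" using F_sub[OF f] by blast
  then have "inj_on phi ?A" by (rule inj_on_subset[OF phi_inj])
  then have "card (phi ` ?A) = card ?A" by (rule card_image)
  ultimately show ?thesis by simp
qed

lemma even_change: fixes P :: "'e \<times> nat \<Rightarrow> bool" assumes f: "f \<in> F" shows "even (card {x\<in>f. P x \<noteq> P (phi x)})"
proof -
  have e: "{x\<in>f. P x \<noteq> P (phi x)} = sd {x\<in>f. P x} {x\<in>f. P (phi x)}" by auto
  have "finite {x\<in>f. P x}" "finite {x\<in>f. P (phi x)}" using F_fin[OF f] by auto
  then have "odd (card (sd {x\<in>f. P x} {x\<in>f. P (phi x)})) = (odd (card {x\<in>f. P x}) \<noteq> odd (card {x\<in>f. P (phi x)}))"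
    by (rule odd_card_sd)
  then have "odd (card {x\<in>f. P x \<noteq> P (phi x)}) = (odd (card {x\<in>f. P x}) \<noteq> odd (card {x\<in>f. P x}))"
    by (simp only: e card_shift[OF f, of P])
  then show ?thesis by blast
qed

end


context diag
begin

abbreviation "cob S \<equiv> {e\<in>E. (endpt e 0 \<in> S) \<noteq> (endpt e 1 \<in> S)}"
abbreviation "bd T \<equiv> {f\<in>F. odd (card {d\<in>f. fst d \<in> T})}"
definition II where "II = (\<lambda>T. bd T) ` Pow E"
abbreviation "rel a b \<equiv> a = b \<or> {a, b} \<in> II"

lemma conn_const:
  assumes g: "\<forall>e\<in>E. g (endpt e 0) = g (endpt e 1)" and u: "u \<in> V" and w: "w \<in> V"
  shows "g u = g w"
proof -
  have "(u, w) \<in> R\<^sup>*" using conn u w unfolding shadow_connected_def by blast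
  then show ?thesis
  proof (induction rule: rtrancl_induct)
    case base then show ?case by simp
  next
    case (step y z)
    then show ?case using g by auto
  qed
qed

lemma cob_hom: "cob (sd S T) = sd (cob S) (cob T)" by auto

lemma bd_hom: "bd (sd S T) = sd (bd S) (bd T)"
proof (rule set_eqI)
  fix f
  show "f \<in> bd (sd S T) \<longleftrightarrow> f \<in> sd (bd S) (bd T)"
  proof (cases "f \<in> F")
    case True
    have e: "{d\<in>f. fst d \<in> sd S T} = sd {d\<in>f. fst d \<in> S} {d\<in>f. fst d \<in> T}" by auto
    have "finite {d\<in>f. fst d \<in> S}" "finite {d\<in>f. fst d \<in> T}" using F_fin[OF True] by auto
    then have "odd (card (sd {d\<in>f. fst d \<in> S} {d\<in>f. fst d \<in> T})) =
       (odd (card {d\<in>f. fst d \<in> S}) \<noteq> odd (card {d\<in>f. fst d \<in> T}))" by (rule odd_card_sd)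
    then have o: "odd (card {d\<in>f. fst d \<in> sd S T}) =
       (odd (card {d\<in>f. fst d \<in> S}) \<noteq> odd (card {d\<in>f. fst d \<in> T}))" unfolding e .
    have m1: "f \<in> bd (sd S T) \<longleftrightarrow> odd (card {d\<in>f. fst d \<in> sd S T})"
      using True by (simp only: mem_Collect_eq simp_thms)
    have m2: "f \<in> bd S \<longleftrightarrow> odd (card {d\<in>f. fst d \<in> S})"
      using True by (simp only: mem_Collect_eq simp_thms)
    have m3: "f \<in> bd T \<longleftrightarrow> odd (card {d\<in>f. fst d \<in> T})"
      using True by (simp only: mem_Collect_eq simp_thms)
    have m4: "f \<in> sd (bd S) (bd T) \<longleftrightarrow> (f \<in> bd S) \<noteq> (f \<in> bd T)" by (rule in_sd)
    show ?thesis unfolding m4 m1 m2 m3 o ..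
  next
    case False then show ?thesis by simp
  qed
qed

lemma ker_cob: "{S\<in>Pow V. cob S = {}} = {{}, V}"
proof
  show "{{}, V} \<subseteq> {S\<in>Pow V. cob S = {}}" using endpt_in by auto
  show "{S\<in>Pow V. cob S = {}} \<subseteq> {{}, V}"
  proof
    fix S assume "S \<in> {S\<in>Pow V. cob S = {}}"
    then have S: "S \<subseteq> V" "cob S = {}" by auto
    then have g: "\<forall>e\<in>E. (endpt e 0 \<in> S) = (endpt e 1 \<in> S)" by blast
    show "S \<in> {{}, V}"
    proof (cases "S = {}")
      case False
      then obtain u where u: "u \<in> S" by blast
      have "V \<subseteq> S"
      proof
        fix w assume "w \<in> V"
        then have "(u \<in> S) = (w \<in> S)" using conn_const[OF g] u S(1) by blast
        then show "w \<in> S" using u by simp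
      qed
      then show ?thesis using S(1) by auto
    qed simp
  qed
qed

lemma c1: "card (Pow V) = 2 * card ((\<lambda>S. cob S) ` Pow V)"
proof -
  have "card (Pow V) = card {S\<in>Pow V. cob S = {}} * card ((\<lambda>S. cob S) ` Pow V)"
    by (rule hom_card[OF finV]) (rule cob_hom)
  moreover have "card {S\<in>Pow V. cob S = {}} = 2" unfolding ker_cob using Vne by simp
  ultimately show ?thesis by simp
qed

lemma c2: "card (Pow E) = card {T\<in>Pow E. bd T = {}} * card II"
  unfolding II_def by (rule hom_card[OF finE]) (rule bd_hom)

lemma vert_flip: "vert (flip d) = endpt (fst d) (1 - snd d)"
  unfolding dart_vertex_def by simp

lemma bd_cob: assumes "S \<subseteq> V" shows "bd (cob S) = {}"
proof -
  have "\<not> odd (card {d\<in>f. fst d \<in> cob S})" if f: "f \<in> F" for f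
  proof -
    have "{d\<in>f. fst d \<in> cob S} = {d\<in>f. (vert d \<in> S) \<noteq> (vert (phi d) \<in> S)}"
    proof (rule Collect_cong, rule conj_cong[OF refl])
      fix d assume "d \<in> f"
      then have d: "d \<in> D" using F_sub[OF f] by blast
      then have "fst d \<in> E" "snd d = 0 \<or> snd d = 1" unfolding D_iff by auto
      then show "(fst d \<in> cob S) = ((vert d \<in> S) \<noteq> (vert (phi d) \<in> S))"
        using vert_phi[OF d] vert_flip[of d] unfolding dart_vertex_def by auto
    qed
    then show ?thesis using even_change[OF f] by simp
  qed
  then show ?thesis by blast
qed

lemma bd_beta: "bd {e\<in>E. h e 0 = h e 1} = {}"
proof -
  let ?hh = "\<lambda>d. h (fst d) (snd d)"
  have "\<not> odd (card {d\<in>f. fst d \<in> {e\<in>E. h e 0 = h e 1}})" if f: "f \<in> F" for f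
  proof -
    have "{d\<in>f. fst d \<in> {e\<in>E. h e 0 = h e 1}} = {d\<in>f. (?hh d = 1) \<noteq> (?hh (phi d) = 1)}"
    proof (rule Collect_cong, rule conj_cong[OF refl])
      fix d assume "d \<in> f"
      then have d: "d \<in> D" using F_sub[OF f] by blast
      then have e: "fst d \<in> E" "snd d = 0 \<or> snd d = 1" unfolding D_iff by auto
      have "?hh (phi d) = - ?hh (flip d)" unfolding phi_def using hrot flip_D[OF d] by blast
      moreover have "h (fst d) 0 = 1 \<or> h (fst d) 0 = -1" "h (fst d) 1 = 1 \<or> h (fst d) 1 = -1"
        using hval e(1) by auto
      ultimately show "(fst d \<in> {e\<in>E. h e 0 = h e 1}) = ((?hh d = 1) \<noteq> (?hh (phi d) = 1))"
        using e by auto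
    qed
    then show ?thesis using even_change[OF f] by simp
  qed
  then show ?thesis by blast
qed


lemma face_eq: "f \<in> F \<Longrightarrow> z \<in> f \<Longrightarrow> f = orb z"
proof -
  assume f: "f \<in> F" and z: "z \<in> f"
  then obtain y where y: "y \<in> D" "f = orb y" unfolding F_iff by blast
  then show ?thesis using orb_eq[OF y(1)] z by simp
qed

lemma orb_in_F: "x \<in> D \<Longrightarrow> orb x \<in> F" unfolding F_iff by blast

lemma pair: assumes d: "d \<in> D" and ne: "orb d \<noteq> orb (flip d)"
  shows "bd {fst d} = {orb d, orb (flip d)}"
proof -
  have fd: "flip d \<in> D" using flip_D[OF d] .
  have cnt: "{x\<in>f. fst x \<in> {fst d}} = f \<inter> {d, flip d}" if f: "f \<in> F" for f
  proof -
    have "x = d \<or> x = flip d" if "x \<in> D" "fst x = fst d" for x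
      using that d unfolding D_iff flip_def by (cases x, cases d) auto
    then show ?thesis using F_sub[OF f] by auto
  qed
  have dnf: "flip d \<notin> orb d" using orb_eq[OF d, of "flip d"] ne by blast
  have fnd: "d \<notin> orb (flip d)" using orb_eq[OF fd, of d] ne by blast
  show ?thesis
  proof (rule set_eqI)
    fix f
    show "f \<in> bd {fst d} \<longleftrightarrow> f \<in> {orb d, orb (flip d)}"
    proof (cases "f \<in> F")
      case False
      have "orb d \<in> F" "orb (flip d) \<in> F" using orb_in_F d fd by auto
      then show ?thesis using False by blast
    next
      case True
      have "card (f \<inter> {d, flip d}) = (if f = orb d \<or> f = orb (flip d) then 1 else 0)"
      proof (cases "f = orb d")
        case True
        then have "f \<inter> {d, flip d} = {d}" using dnf orb_self[of d] by auto
        then show ?thesis using True by simp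
      next
        case False
        note F1 = False
        show ?thesis
        proof (cases "f = orb (flip d)")
          case True
          then have "f \<inter> {d, flip d} = {flip d}" using fnd orb_self[of "flip d"] by auto
          then show ?thesis using True by simp
        next
          case False
          have "d \<notin> f" using face_eq[OF \<open>f \<in> F\<close>, of d] F1 by auto
          moreover have "flip d \<notin> f" using face_eq[OF \<open>f \<in> F\<close>, of "flip d"] False by auto
          ultimately have "f \<inter> {d, flip d} = {}" by auto
          then show ?thesis using False F1 by simp
        qed
      qed
      then show ?thesis using True cnt[OF True] by auto
    qed
  qed
qed

lemma II_sd: "X \<in> II \<Longrightarrow> Y \<in> II \<Longrightarrow> sd X Y \<in> II"
proof -
  assume "X \<in> II" "Y \<in> II"
  then obtain S T where "S \<in> Pow E" "T \<in> Pow E" "X = bd S" "Y = bd T" unfolding II_def by blast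
  moreover have "sd S T \<in> Pow E" using calculation by auto
  then have "bd (sd S T) \<in> II" unfolding II_def by (rule imageI)
  ultimately show ?thesis using bd_hom[of S T] by simp
qed

lemma rel_sym: assumes r: "rel a b" shows "rel b a"
proof -
  have "{b, a} = {a, b}" by (rule insert_commute)
  then show ?thesis using r by (cases "a = b") auto
qed

lemma rel_trans: assumes ab: "rel a b" and bc: "rel b c" shows "rel a c"
proof (cases "a = b")
  case True then show ?thesis using bc by blast
next
  case nab: False
  show ?thesis
  proof (cases "b = c")
    case True then show ?thesis using ab by blast
  next
    case nbc: False
    show ?thesis
    proof (cases "a = c")
      case True then show ?thesis by blast
    next
      case nac: False
      have "{a, b} \<in> II" using ab nab by blast
      moreover have "{b, c} \<in> II" using bc nbc by blast
      ultimately have "sd {a, b} {b, c} \<in> II" by (rule II_sd)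
      moreover have "sd {a, b} {b, c} = {a, c}" using nab nbc nac by auto
      ultimately show ?thesis by simp
    qed
  qed
qed

lemma rel_flip: assumes x: "x \<in> D" shows "rel (orb x) (orb (flip x))"
proof (cases "orb x = orb (flip x)")
  case False
  have "{fst x} \<in> Pow E" using x unfolding D_iff by auto
  then have "bd {fst x} \<in> II" unfolding II_def by blast
  then have "{orb x, orb (flip x)} \<in> II" unfolding pair[OF x False] .
  then show ?thesis by blast
qed simp

lemma rel_rot: assumes x: "x \<in> D" shows "rel (orb (rot x)) (orb x)"
proof -
  have fx: "flip x \<in> D" using flip_D[OF x] .
  have "rot x = phi (flip x)" unfolding phi_def using flip_flip[OF x] by simp
  also have "\<dots> = (phi ^^ 1) (flip x)" by simp
  finally have "rot x \<in> orb (flip x)" by blast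
  then have e: "orb (rot x) = orb (flip x)" using orb_eq[OF fx] by blast
  show ?thesis unfolding e using rel_sym[OF rel_flip[OF x]] .
qed

lemma rot_powD: assumes x: "x \<in> D" shows "(rot ^^ k) x \<in> D"
proof (induction k)
  case 0 show ?case using x by simp
next
  case (Suc k)
  have "(rot ^^ Suc k) x = rot ((rot ^^ k) x)" by simp
  then show ?case using rot_D[OF Suc] by (simp only:)
qed

lemma rel_rotk: assumes x: "x \<in> D" shows "rel (orb ((rot ^^ k) x)) (orb x)"
proof (induction k)
  case 0 then show ?case by simp
next
  case (Suc k)
  have "(rot ^^ Suc k) x = rot ((rot ^^ k) x)" by simp
  then have "rel (orb ((rot ^^ Suc k) x)) (orb ((rot ^^ k) x))"
    using rel_rot[OF rot_powD[OF x]] by (simp only:)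
  then show ?case by (rule rel_trans[OF _ Suc.IH])
qed

lemma at_rel: assumes v: "v \<in> V" and x: "x \<in> darts_at E endpt v" and y: "y \<in> darts_at E endpt v"
  shows "rel (orb y) (orb x)"
proof -
  have "darts_at E endpt v = {(rot ^^ k) x | k. k < 4}" using atrot[OF v x] .
  then obtain k where k: "y = (rot ^^ k) x" using y by blast
  have "x \<in> D" using x unfolding darts_at_def by blast
  then show ?thesis unfolding k by (rule rel_rotk)
qed

lemma all_rel: assumes x: "x \<in> D" and y: "y \<in> D" shows "rel (orb y) (orb x)"
proof -
  let ?Q = "\<lambda>v. \<forall>d\<in>darts_at E endpt v. rel (orb d) (orb x)"
  have edge: "?Q b" if e: "e \<in> E" and i: "i \<in> {0,1}" and a: "a = endpt e i" and b: "b = endpt e (1 - i)"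
    and Qa: "?Q a" for e i a b
  proof
    fix d assume db: "d \<in> darts_at E endpt b"
    have ei: "(e, i) \<in> darts_at E endpt a" using e i a unfolding darts_at_def darts_def dart_vertex_def by auto
    have ei': "(e, 1 - i) \<in> darts_at E endpt b" using e i b unfolding darts_at_def darts_def dart_vertex_def by auto
    have r1: "rel (orb (e, i)) (orb x)" using bspec[OF Qa ei] .
    have eD: "(e, i) \<in> D" using ei unfolding darts_at_def by blast
    have fl: "flip (e, i) = (e, 1 - i)" unfolding flip_def by simp
    have r2: "rel (orb (e, 1 - i)) (orb (e, i))" using rel_sym[OF rel_flip[OF eD]] unfolding fl .
    have bV: "b \<in> V" using endpt_in e i b by auto
    have r3: "rel (orb d) (orb (e, 1 - i))" using at_rel[OF bV ei' db] .
    show "rel (orb d) (orb x)" using rel_trans[OF r3 rel_trans[OF r2 r1]] .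
  qed
  have v0: "vert x \<in> V" using vert_D[OF x] .
  have Q0: "?Q (vert x)"
  proof
    fix d assume dx: "d \<in> darts_at E endpt (vert x)"
    have "x \<in> darts_at E endpt (vert x)" using x unfolding darts_at_def by simp
    then show "rel (orb d) (orb x)" using dx by (rule at_rel[OF v0])
  qed
  have vy: "vert y \<in> V" using vert_D[OF y] .
  have "(vert x, vert y) \<in> R\<^sup>*" using conn v0 vy unfolding shadow_connected_def by blast
  then have "?Q (vert y)"
  proof (induction rule: rtrancl_induct)
    case base show ?case using Q0 .
  next
    case (step a b)
    from step(2) obtain e where e: "e \<in> E"
      and ab: "(a = endpt e 0 \<and> b = endpt e 1) \<or> (a = endpt e 1 \<and> b = endpt e 0)" by blast
    from ab show ?case
    proof
      assume "a = endpt e 0 \<and> b = endpt e 1"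
      then show ?thesis using edge[OF e, of 0 a b] step(3) by fastforce
    next
      assume "a = endpt e 1 \<and> b = endpt e 0"
      then show ?thesis using edge[OF e, of 1 a b] step(3) by fastforce
    qed
  qed
  moreover have "y \<in> darts_at E endpt (vert y)" using y unfolding darts_at_def by simp
  ultimately show ?thesis by (rule bspec)
qed

lemma faces_rel: assumes f: "f \<in> F" and g: "g \<in> F" shows "rel f g"
proof -
  obtain x where x: "x \<in> D" "f = orb x" using f unfolding F_iff by blast
  obtain y where y: "y \<in> D" "g = orb y" using g unfolding F_iff by blast
  show ?thesis unfolding x(2) y(2) by (rule all_rel[OF y(1) x(1)])
qed

lemma empty_II: "{} \<in> II"
proof -
  have "{} \<in> Pow E" by simp
  then have "bd {} \<in> II" unfolding II_def by (rule imageI)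
  moreover have "bd {} = {}" by simp
  ultimately show ?thesis by simp
qed

lemma evens: "G \<subseteq> F \<Longrightarrow> even (card G) \<Longrightarrow> G \<in> II"
proof (induction "card G" arbitrary: G rule: less_induct)
  case less
  show ?case
  proof (cases "G = {}")
    case True
    then show ?thesis using empty_II by simp
  next
    case False
    have fG: "finite G" using less(2) finF finite_subset by blast
    then obtain a where a: "a \<in> G" using False by blast
    have "card G \<noteq> 1" using less(3) by auto
    then have "G \<noteq> {a}" by auto
    then obtain b where b: "b \<in> G" "b \<noteq> a" using a by blast
    let ?G' = "G - {a, b}"
    have sub: "{a, b} \<subseteq> G" using a b by blast
    have c2: "card {a, b} = 2" using b(2) by simp
    have cG': "card ?G' = card G - 2"
      using card_Diff_subset[OF _ sub] c2 by simp
    have "card {a, b} \<le> card G" using fG sub by (rule card_mono)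
    then have "card G \<ge> 2" using c2 by simp
    then have "card ?G' < card G" "even (card ?G')" using cG' less(3) by auto
    moreover have "?G' \<subseteq> F" using less(2) by blast
    ultimately have G'I: "?G' \<in> II" using less(1) by blast
    have "a \<in> F" "b \<in> F" using less(2) a b by auto
    then have "rel a b" by (rule faces_rel)
    then have "{a, b} \<in> II" using b(2) by blast
    with G'I have "sd ?G' {a, b} \<in> II" by (rule II_sd)
    moreover have "sd ?G' {a, b} = G" using sub by auto
    ultimately show ?thesis by simp
  qed
qed

definition par :: "('e \<times> nat) set set \<Rightarrow> unit set" where
  "par G = (if odd (card G) then {()} else {})"

lemma sd_units: "sd {()} {()} = {}" "sd {} {()} = {()}" "sd {()} {} = {()}" "sd ({}::unit set) {} = {}"
  by (auto simp: sd_def)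

lemma par_hom: assumes "S \<subseteq> F" "T \<subseteq> F" shows "par (sd S T) = sd (par S) (par T)"
proof -
  have "finite S" "finite T" using assms finF finite_subset by auto
  then have o: "odd (card (sd S T)) = (odd (card S) \<noteq> odd (card T))" by (rule odd_card_sd)
  show ?thesis
  proof (cases "odd (card S)"; cases "odd (card T)")
  qed (simp_all only: par_def o sd_units if_True if_False simp_thms)
qed

lemma c3: "card (Pow F) = card {G\<in>Pow F. even (card G)} * 2"
proof -
  have "card (Pow F) = card {G\<in>Pow F. par G = {}} * card (par ` Pow F)"
    by (rule hom_card[OF finF]) (rule par_hom)
  moreover have "{G\<in>Pow F. par G = {}} = {G\<in>Pow F. even (card G)}" by (auto simp: par_def)
  moreover have "par ` Pow F = {{}, {()}}"
  proof -
    obtain v where v: "v \<in> V" using Vne by blast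
    then have "card (darts_at E endpt v) = 4" by (rule at4)
    then have "darts_at E endpt v \<noteq> {}" by auto
    then obtain x where "x \<in> darts_at E endpt v" by blast
    then have "x \<in> D" unfolding darts_at_def by blast
    then have f0: "orb x \<in> F" by (rule orb_in_F)
    have p1: "{} \<in> Pow F" "{orb x} \<in> Pow F" using f0 by auto
    have p2: "par {} = {}" "par {orb x} = {()}" by (simp_all add: par_def)
    have "{} \<in> par ` Pow F" using imageI[OF p1(1), of par] unfolding p2 .
    moreover have "{()} \<in> par ` Pow F" using imageI[OF p1(2), of par] unfolding p2 .
    ultimately have "{{}, {()}} \<subseteq> par ` Pow F" by blast
    moreover have "par ` Pow F \<subseteq> {{}, {()}}" by (auto simp: par_def)
    ultimately show ?thesis by blast
  qed
  ultimately show ?thesis by simp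
qed

lemma beta_in: "{e\<in>E. h e 0 = h e 1} \<in> (\<lambda>S. cob S) ` Pow V"
proof -
  let ?K = "{T\<in>Pow E. bd T = {}}"
  let ?C = "(\<lambda>S. cob S) ` Pow V"
  let ?Ev = "{G\<in>Pow F. even (card G)}"
  have CK: "?C \<subseteq> ?K" using bd_cob by auto
  have fK: "finite ?K" using finE by simp
  have fII: "finite II" unfolding II_def using finE by simp
  have "?Ev \<subseteq> II" using evens by blast
  then have EvII: "card ?Ev \<le> card II" using fII by (rule card_mono[rotated])
  have Evpos: "card ?Ev > 0"
  proof -
    have "{} \<in> ?Ev" by simp
    moreover have "finite ?Ev" using finF by simp
    ultimately show ?thesis using card_gt_0_iff by blast
  qed
  have e1: "2 ^ card V = 2 * card ?C" using c1 card_Pow[OF finV] by simp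
  have e2: "2 ^ card E = card ?K * card II" using c2 card_Pow[OF finE] by simp
  have e3: "2 ^ card F = card ?Ev * 2" using c3 card_Pow[OF finF] by simp
  have eu: "card V + card F = card E + 2" using euler by linarith
  have "card ?K * card ?Ev * 4 \<le> card ?K * card II * 4" using EvII by simp
  also have "\<dots> = 2 ^ card E * 2 ^ 2" using e2 by simp
  also have "\<dots> = 2 ^ (card V + card F)" unfolding eu by (simp add: power_add)
  also have "\<dots> = (2 * card ?C) * (card ?Ev * 2)" unfolding power_add e1 e3 ..
  finally have "card ?K * card ?Ev * 4 \<le> card ?C * card ?Ev * 4" by simp
  then have "card ?K \<le> card ?C" using Evpos by simp
  then have "?C = ?K" using card_seteq[OF fK CK] by blast
  moreover have "{e\<in>E. h e 0 = h e 1} \<in> ?K" using bd_beta by simp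
  ultimately show ?thesis by simp
qed

lemma pm_lemma: fixes a b c d :: int
  assumes "a = 1 \<or> a = -1" "b = 1 \<or> b = -1" "c = 1 \<or> c = -1" "d = 1 \<or> d = -1"
  shows "a * c = b * d \<Longrightarrow> a * b = c * d"
    and "a * b = 1 \<Longrightarrow> a = b" and "a * b \<noteq> 1 \<Longrightarrow> a = - b"
  using assms by auto

lemma main:
  "\<exists>s1 s2. sign_assignment V E endpt h s1 \<and> sign_assignment V E endpt h s2
           \<and> (\<forall>v\<in>V. s1 v = - s2 v)
           \<and> (\<forall>s. sign_assignment V E endpt h s \<longrightarrow> (\<forall>v\<in>V. s v = s1 v) \<or> (\<forall>v\<in>V. s v = s2 v))"
proof -
  obtain S0 where S0: "S0 \<subseteq> V" "cob S0 = {e\<in>E. h e 0 = h e 1}" using beta_in by blast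
  define s1 :: "'v \<Rightarrow> int" where "s1 v = (if v \<in> S0 then -1 else 1)" for v
  define s2 :: "'v \<Rightarrow> int" where "s2 v = - s1 v" for v
  have sa1: "sign_assignment V E endpt h s1"
    unfolding sign_assignment_def
  proof (intro conjI ballI)
    fix v show "s1 v = 1 \<or> s1 v = -1" unfolding s1_def by simp
  next
    fix e assume e: "e \<in> E"
    have "(endpt e 0 \<in> S0) \<noteq> (endpt e 1 \<in> S0) \<longleftrightarrow> h e 0 = h e 1"
      using S0(2) e by blast
    then show "s1 (endpt e 0) * s1 (endpt e 1) = beta h e"
      unfolding s1_def beta_def by auto
  qed
  have sa2: "sign_assignment V E endpt h s2"
    using sa1 unfolding sign_assignment_def s2_def by auto
  have uniq: "(\<forall>v\<in>V. s v = s1 v) \<or> (\<forall>v\<in>V. s v = s2 v)"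
    if s: "sign_assignment V E endpt h s" for s
  proof -
    let ?g = "\<lambda>v. s v * s1 v"
    have pm: "\<And>v. v \<in> V \<Longrightarrow> (s v = 1 \<or> s v = -1) \<and> (s1 v = 1 \<or> s1 v = -1)"
      using s sa1 unfolding sign_assignment_def by blast
    have g: "\<forall>e\<in>E. ?g (endpt e 0) = ?g (endpt e 1)"
    proof
      fix e assume e: "e \<in> E"
      have a: "s (endpt e 0) * s (endpt e 1) = s1 (endpt e 0) * s1 (endpt e 1)"
        using s sa1 e unfolding sign_assignment_def by auto
      have "endpt e 0 \<in> V" "endpt e 1 \<in> V" using endpt_in e by auto
      then show "?g (endpt e 0) = ?g (endpt e 1)" using pm_lemma(1)[OF _ _ _ _ a] pm by blast
    qed
    obtain v0 where v0: "v0 \<in> V" using Vne by blast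
    have const: "\<And>w. w \<in> V \<Longrightarrow> ?g w = ?g v0" using conn_const[OF g] v0 by blast
    show ?thesis
    proof (cases "?g v0 = 1")
      case True
      then have "\<forall>v\<in>V. s v = s1 v" using const pm pm_lemma(2) by metis
      then show ?thesis by blast
    next
      case False
      then have "\<forall>v\<in>V. s v = s2 v" using const pm pm_lemma(3) unfolding s2_def by metis
      then show ?thesis by blast
    qed
  qed
  show ?thesis
    by (rule exI[where x=s1], rule exI[where x=s2]) (use sa1 sa2 uniq in \<open>auto simp: s2_def\<close>)
qed

end

theorem proposition2p1:
  fixes V :: "'v set" and E :: "'e set" and endpt :: "'e \<Rightarrow> nat \<Rightarrow> 'v"
    and h :: "'e \<Rightarrow> nat \<Rightarrow> int" and rot :: "('e \<times> nat) \<Rightarrow> ('e \<times> nat)"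
  assumes "planar_connected_link_diagram V E endpt h rot"
    and "V \<noteq> {}"
  shows "\<exists>s1 s2. sign_assignment V E endpt h s1 \<and> sign_assignment V E endpt h s2
           \<and> (\<forall>v\<in>V. s1 v = - s2 v)
           \<and> (\<forall>s. sign_assignment V E endpt h s \<longrightarrow> (\<forall>v\<in>V. s v = s1 v) \<or> (\<forall>v\<in>V. s v = s2 v))"
proof -
  interpret diag V E endpt h rot using assms by unfold_locales
  show ?thesis by (rule main)
qed

end
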